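(* Let $N:(0,1]\to\mathbb{N}$ be a non-increasing function. Then there exist a distribution $\mu$ on $\{0,1\}^{\mathbb{N}}$ and a countable set $E\subset(0,1]$ such that $\mathcal{N}_\xi(\varepsilon)=N(\varepsilon)$ for every $\varepsilon\in(0,\tfrac12]\setminus E$, and $\Delta_n(\mu)\to0$ as $n\to\infty$.
   Context: For $X\sim\mu$, define $\xi(i,j):=\mathbb{P}(X_i\neq X_j)$ for $i,j\in\mathbb{N}$. For $\varepsilon>0$, $\mathcal{N}_\xi(\varepsilon)$ is the $\varepsilon$-covering number of $(\mathbb{N},\xi)$: the minimal cardinality of a set $S\subset\mathbb{N}$ such that every $i\in\mathbb{N}$ has some $s\in S$ with $\xi(i,s)\le\varepsilon$. For $n\ge1$, with $X^{(1)},\dots,X^{(n)}$ i.i.d. from $\mu$, $\Delta_n(\mu):=\mathbb{E}\sup_{j\in\mathbb{N}}\left|\frac1n\sum_{i=1}^nX^{(i)}_j-\mathbb{E}[X_j]\right|$. *)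

theory Defs
  imports "HOL-Probability.Probability"
begin

text \<open>A distribution on {0,1}^N: a probability measure on the product sigma-algebra
  of (nat => bool), coordinate value True encoding 1.\<close>

definition cube_space :: "(nat \<Rightarrow> bool) measure" where
  "cube_space = Pi\<^sub>M UNIV (\<lambda>_. count_space UNIV)"

definition xi :: "(nat \<Rightarrow> bool) measure \<Rightarrow> nat \<Rightarrow> nat \<Rightarrow> real" where
  "xi M i j = measure M {x \<in> space M. x i \<noteq> x j}"

text \<open>epsilon-covering number of (N, xi); infinity if no finite cover exists.\<close>
definition covnum :: "(nat \<Rightarrow> bool) measure \<Rightarrow> real \<Rightarrow> enat" where
  "covnum M \<epsilon> = Inf {enat (card S) | S. finite S \<and> (\<forall>i. \<exists>s\<in>S. xi M i s \<le> \<epsilon>)}"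

text \<open>Delta_n(mu) = E sup_j |(1/n) sum_{i<n} X^(i)_j - E X_j|, with the n i.i.d.
  samples realised on the product measure of n copies of M.\<close>
definition Delta :: "(nat \<Rightarrow> bool) measure \<Rightarrow> nat \<Rightarrow> real" where
  "Delta M n = (\<integral>\<omega>. (SUP j. \<bar>(\<Sum>i<n. of_bool (\<omega> i j)) / real n
       - measure M {x \<in> space M. x j}\<bar>) \<partial>(Pi\<^sub>M {..<n} (\<lambda>_. M)))"

end

theory Submission
  imports Defs
begin


lemma covnum_formula:
  fixes d :: "nat \<Rightarrow> nat \<Rightarrow> real" and r :: "nat \<Rightarrow> real"
  assumes d: "\<And>i j. d i j = (if i = j then 0 else max (r i) (r j))" and r0: "r 0 = 0"
    and rnn: "\<And>j. 0 \<le> r j" and eps: "0 < \<epsilon>" and fin: "finite {j. \<epsilon> < r j}"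
  shows "Inf {enat (card S) | S. finite S \<and> (\<forall>i. \<exists>s\<in>S. d i s \<le> \<epsilon>)} = enat (card {j. \<epsilon> < r j} + 1)"
proof (rule antisym)
  let ?B = "{j. \<epsilon> < r j}"
  have n0: "0 \<notin> ?B" using r0 eps by simp
  have cov: "\<forall>i. \<exists>s\<in>insert 0 ?B. d i s \<le> \<epsilon>"
  proof
    fix i show "\<exists>s\<in>insert 0 ?B. d i s \<le> \<epsilon>"
    proof (cases "\<epsilon> < r i")
      case True then show ?thesis using d[of i i] eps by auto
    next
      case False then show ?thesis using d[of i 0] r0 eps rnn[of i] by (auto intro!: bexI[of _ 0])
    qed
  qed
  have "card (insert 0 ?B) = card ?B + 1" using fin n0 by simp
  then show "Inf {enat (card S) | S. finite S \<and> (\<forall>i. \<exists>s\<in>S. d i s \<le> \<epsilon>)} \<le> enat (card ?B + 1)"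
    using cov fin by (intro Inf_lower) (auto intro!: exI[of _ "insert 0 ?B"])
  show "enat (card ?B + 1) \<le> Inf {enat (card S) | S. finite S \<and> (\<forall>i. \<exists>s\<in>S. d i s \<le> \<epsilon>)}"
  proof (rule Inf_greatest, clarify)
    fix S assume S: "finite S" "\<forall>i. \<exists>s\<in>S. d i s \<le> \<epsilon>"
    have sub: "?B \<subseteq> S"
    proof
      fix j assume j: "j \<in> ?B"
      from S obtain s where s: "s\<in>S" "d j s \<le> \<epsilon>" by blast
      have "s = j"
      proof (rule ccontr)
        assume "s \<noteq> j" then have "d j s \<ge> r j" using d[of j s] by simp
        then show False using s j by simp
      qed
      then show "j \<in> S" using s by simp
    qed
    obtain s where s: "s \<in> S" "d 0 s \<le> \<epsilon>" using S by blast
    have "s \<notin> ?B"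
    proof (cases "s = 0")
      case True then show ?thesis using n0 by simp
    next
      case False then show ?thesis using d[of 0 s] r0 rnn[of s] s by simp
    qed
    then have "insert s ?B \<subseteq> S" using sub s by auto
    hence "card (insert s ?B) \<le> card S" using card_mono S(1) by blast
    thus "enat (card ?B + 1) \<le> enat (card S)" using fin \<open>s\<notin>?B\<close> by simp
  qed
qed

definition TT :: "(real \<Rightarrow> nat) \<Rightarrow> nat \<Rightarrow> real set" where
  "TT N k = {e. 0 < e \<and> e < 1/2 \<and> Suc k < N e}"

definition rr :: "(real \<Rightarrow> nat) \<Rightarrow> nat \<Rightarrow> real" where
  "rr N j = (case j of 0 \<Rightarrow> 0 | Suc k \<Rightarrow> if TT N k = {} then 0 else Sup (TT N k))"

lemma rr_bounds: "0 \<le> rr N j \<and> rr N j \<le> 1/2"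
proof (cases j)
  case 0 then show ?thesis by (simp add: rr_def)
next
  case (Suc k)
  show ?thesis
  proof (cases "TT N k = {}")
    case True then show ?thesis using Suc by (simp add: rr_def)
  next
    case False
    then obtain e where e: "e \<in> TT N k" by blast
    have bdd: "bdd_above (TT N k)" by (auto simp: TT_def bdd_above_def intro!: exI[of _ "1/2"])
    have "e \<le> Sup (TT N k)" using e bdd by (rule cSup_upper)
    moreover have "Sup (TT N k) \<le> 1/2" using False by (intro cSup_least) (auto simp: TT_def)
    moreover have "0 < e" using e by (simp add: TT_def)
    ultimately show ?thesis using Suc False by (simp add: rr_def)
  qed
qed

lemma rr_gt:
  assumes mono: "\<And>a b. 0 < a \<Longrightarrow> a \<le> b \<Longrightarrow> b \<le> 1 \<Longrightarrow> N b \<le> N a"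
    and d: "0 < \<delta>" "\<delta> < rr N (Suc k)"
  shows "Suc k < N \<delta>"
proof -
  have ne: "TT N k \<noteq> {}" using d by (auto simp: rr_def)
  then have "\<delta> < Sup (TT N k)" using d by (simp add: rr_def)
  then obtain e where e: "e \<in> TT N k" "\<delta> < e" using ne by (meson less_cSupD)
  then have "N e \<le> N \<delta>" using d by (intro mono) (auto simp: TT_def)
  then show ?thesis using e by (simp add: TT_def)
qed

lemma rr_ge:
  assumes "0 < \<epsilon>" "\<epsilon> < 1/2" "Suc k < N \<epsilon>"
  shows "\<epsilon> \<le> rr N (Suc k)"
proof -
  have e: "\<epsilon> \<in> TT N k" using assms by (simp add: TT_def)
  have bdd: "bdd_above (TT N k)" by (auto simp: TT_def bdd_above_def intro!: exI[of _ "1/2"])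
  have "\<epsilon> \<le> Sup (TT N k)" using e bdd by (rule cSup_upper)
  then show ?thesis using e by (auto simp: rr_def)
qed

lemma rr_finite:
  assumes mono: "\<And>a b. 0 < a \<Longrightarrow> a \<le> b \<Longrightarrow> b \<le> 1 \<Longrightarrow> N b \<le> N a" and d: "0 < \<delta>"
  shows "finite {j. \<delta> < rr N j}"
proof -
  have "{j. \<delta> < rr N j} \<subseteq> Suc ` {k. Suc k < N \<delta>}"
  proof
    fix j assume j: "j \<in> {j. \<delta> < rr N j}"
    then obtain k where k: "j = Suc k" using d by (cases j) (auto simp: rr_def)
    then show "j \<in> Suc ` {k. Suc k < N \<delta>}" using rr_gt[where N=N and k=k and \<delta>=\<delta>, OF mono d] j by auto
  qed
  moreover have "finite {k. Suc k < N \<delta>}" by (rule finite_subset[of _ "{..<N \<delta>}"]) auto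
  ultimately show ?thesis using finite_subset by blast
qed

lemma rr_card:
  assumes mono: "\<And>a b. 0 < a \<Longrightarrow> a \<le> b \<Longrightarrow> b \<le> 1 \<Longrightarrow> N b \<le> N a"
    and pos: "N \<epsilon> \<ge> 1" and e: "0 < \<epsilon>" "\<epsilon> < 1/2" "\<epsilon> \<notin> range (rr N)"
  shows "card {j. \<epsilon> < rr N j} + 1 = N \<epsilon>"
proof -
  have "{j. \<epsilon> < rr N j} = Suc ` {..< N \<epsilon> - 1}"
  proof (intro equalityI subsetI)
    fix j assume j: "j \<in> {j. \<epsilon> < rr N j}"
    then obtain k where k: "j = Suc k" using e by (cases j) (auto simp: rr_def)
    then show "j \<in> Suc ` {..< N \<epsilon> - 1}" using rr_gt[where N=N and k=k and \<delta>=\<epsilon>, OF mono e(1)] j by auto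
  next
    fix j assume "j \<in> Suc ` {..< N \<epsilon> - 1}"
    then obtain k where k: "j = Suc k" "Suc k < N \<epsilon>" by auto
    have "\<epsilon> \<le> rr N j" using rr_ge[where N=N, OF e(1,2) k(2)] k by simp
    moreover have "\<epsilon> \<noteq> rr N j" using e(3) by auto
    ultimately show "j \<in> {j. \<epsilon> < rr N j}" by simp
  qed
  then show ?thesis using pos by (simp add: card_image)
qed



lemma integrable_if1:
  assumes "prob_space M" "integrable M g" shows "integrable M (\<lambda>x. if b then g x else 1)"
  by (cases b) (simp_all add: assms finite_measure.integrable_const prob_space.finite_measure)

lemma PiM_integral_single:
  fixes g :: "'a \<Rightarrow> real"
  assumes M: "prob_space M" and g: "integrable M g" and i: "i \<in> I" and I: "finite I"
  shows "(\<integral>\<omega>. g (\<omega> i) \<partial>PiM I (\<lambda>_. M)) = (\<integral>x. g x \<partial>M)"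
proof -
  interpret product_prob_space "\<lambda>_. M" I
    using M by (simp add: product_prob_space_def product_sigma_finite_def product_prob_space_axioms_def prob_space_imp_sigma_finite)
  have "(\<integral>\<omega>. (\<Prod>l\<in>I. (\<lambda>l x. if l = i then g x else 1) l (\<omega> l)) \<partial>PiM I (\<lambda>_. M))
      = (\<Prod>l\<in>I. integral\<^sup>L M ((\<lambda>l x. if l = i then g x else 1) l))"
    using I by (intro product_integral_prod) (auto intro!: integrable_if1 M g)
  moreover have "\<And>\<omega>. (\<Prod>l\<in>I. (\<lambda>l x. if l = i then g x else 1) l (\<omega> l)) = g (\<omega> i)"
    using I i by (simp add: prod.delta)
  moreover have "(\<Prod>l\<in>I. integral\<^sup>L M ((\<lambda>l x. if l = i then g x else 1) l)) = integral\<^sup>L M g"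
  proof -
    have "(\<Prod>l\<in>I. integral\<^sup>L M ((\<lambda>l x. if l = i then g x else 1) l)) = (\<Prod>l\<in>I. if l = i then integral\<^sup>L M g else 1)"
      by (intro prod.cong) (auto simp: prob_space.prob_space[OF M])
    then show ?thesis using I i by (simp add: prod.delta)
  qed
  ultimately show ?thesis by simp
qed

lemma PiM_integral_pair:
  fixes h :: "'a \<Rightarrow> real"
  assumes M: "prob_space M" and h: "integrable M h" and h0: "(\<integral>x. h x \<partial>M) = 0"
    and i: "i \<in> I" "k \<in> I" "i \<noteq> k" and I: "finite I"
  shows "(\<integral>\<omega>. h (\<omega> i) * h (\<omega> k) \<partial>PiM I (\<lambda>_. M)) = 0"
proof -
  interpret product_prob_space "\<lambda>_. M" I
    using M by (simp add: product_prob_space_def product_sigma_finite_def product_prob_space_axioms_def prob_space_imp_sigma_finite)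
  have "(\<integral>\<omega>. (\<Prod>l\<in>I. (\<lambda>l x. if l \<in> {i,k} then h x else 1) l (\<omega> l)) \<partial>PiM I (\<lambda>_. M))
      = (\<Prod>l\<in>I. integral\<^sup>L M ((\<lambda>l x. if l \<in> {i,k} then h x else 1) l))"
    using I by (intro product_integral_prod) (auto intro!: integrable_if1 M h)
  moreover have "\<And>\<omega>. (\<Prod>l\<in>I. (\<lambda>l x. if l \<in> {i,k} then h x else 1) l (\<omega> l)) = h (\<omega> i) * h (\<omega> k)"
  proof -
    fix \<omega>
    have "(\<Prod>l\<in>I. (\<lambda>l x. if l \<in> {i,k} then h x else 1) l (\<omega> l)) = (\<Prod>l\<in>I \<inter> {i,k}. h (\<omega> l))"
      using I by (simp add: prod.inter_restrict)
    also have "I \<inter> {i,k} = {i,k}" using i by auto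
    finally show "(\<Prod>l\<in>I. (\<lambda>l x. if l \<in> {i,k} then h x else 1) l (\<omega> l)) = h (\<omega> i) * h (\<omega> k)"
      using i by simp
  qed
  moreover have "(\<Prod>l\<in>I. integral\<^sup>L M ((\<lambda>l x. if l \<in> {i,k} then h x else 1) l)) = 0"
  proof -
    have "integral\<^sup>L M ((\<lambda>l x. if l \<in> {i,k} then h x else 1) i) = 0" using h0 by simp
    then show ?thesis using I i by (intro prod_zero) (auto intro!: bexI[of _ i])
  qed
  ultimately show ?thesis by simp
qed

lemma second_moment:
  fixes h :: "'a \<Rightarrow> real" and n :: nat
  assumes M: "prob_space M" and hm: "h \<in> borel_measurable M" and hb: "\<And>x. x \<in> space M \<Longrightarrow> \<bar>h x\<bar> \<le> 1"
    and h0: "(\<integral>x. h x \<partial>M) = 0"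
  shows "(\<integral>\<omega>. (\<Sum>i<n. h (\<omega> i))^2 \<partial>PiM {..<n} (\<lambda>_. M)) \<le> n"
proof -
  let ?P = "PiM {..<n} (\<lambda>_. M)"
  interpret P: prob_space ?P by (intro prob_space_PiM M)
  interpret M: prob_space M by (rule M)
  have hi: "integrable M h" using hb hm by (intro M.integrable_const_bound[where B=1]) auto
  have mi: "(\<lambda>\<omega>. h (\<omega> i)) \<in> borel_measurable ?P" if "i < n" for i
    using that by (intro measurable_compose[OF measurable_component_singleton[of i "{..<n}" "\<lambda>_. M"] hm]) auto
  have bi: "\<bar>h (\<omega> i)\<bar> \<le> 1" if "\<omega> \<in> space ?P" "i < n" for \<omega> i
    using that hb by (auto simp: space_PiM)
  have int2: "integrable ?P (\<lambda>\<omega>. h (\<omega> i) * h (\<omega> k))" if "i < n" "k < n" for i k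
  proof (intro P.integrable_const_bound[where B=1])
    show "AE x in ?P. norm (h (x i) * h (x k)) \<le> 1"
      using bi that by (auto intro!: AE_I2 simp: abs_mult intro: mult_le_one)
  qed (use mi that in auto)
  have "(\<lambda>\<omega>. (\<Sum>i<n. h (\<omega> i))^2) = (\<lambda>\<omega>. \<Sum>i<n. \<Sum>k<n. h (\<omega> i) * h (\<omega> k))"
    by (simp add: power2_eq_square sum_product)
  then have "(\<integral>\<omega>. (\<Sum>i<n. h (\<omega> i))^2 \<partial>?P) = (\<integral>\<omega>. (\<Sum>i<n. \<Sum>k<n. h (\<omega> i) * h (\<omega> k)) \<partial>?P)"
    by simp
  also have "\<dots> = (\<Sum>i<n. \<integral>\<omega>. (\<Sum>k<n. h (\<omega> i) * h (\<omega> k)) \<partial>?P)"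
    by (rule Bochner_Integration.integral_sum[where I="{..<n}" and M="?P" and f="\<lambda>i \<omega>. \<Sum>k<n. h (\<omega> i) * h (\<omega> k)"]) (use int2 in \<open>auto intro!: integrable_sum\<close>)
  also have "\<dots> = (\<Sum>i<n. \<Sum>k<n. \<integral>\<omega>. h (\<omega> i) * h (\<omega> k) \<partial>?P)"
    by (intro sum.cong refl integral_sum) (use int2 in auto)
  also have "\<dots> \<le> (\<Sum>i<n. 1)"
  proof (rule sum_mono)
    fix i assume i: "i \<in> {..<n}"
    have "(\<Sum>k<n. \<integral>\<omega>. h (\<omega> i) * h (\<omega> k) \<partial>?P) = (\<Sum>k<n. if k = i then \<integral>\<omega>. h (\<omega> i) * h (\<omega> i) \<partial>?P else 0)"
      using i by (intro sum.cong refl) (auto intro!: PiM_integral_pair[OF M hi h0])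
    also have "\<dots> = \<integral>\<omega>. h (\<omega> i) * h (\<omega> i) \<partial>?P" using i by (simp add: sum.delta)
    also have "\<dots> \<le> \<integral>\<omega>. 1 \<partial>?P"
    proof (intro integral_mono)
      fix \<omega> assume "\<omega> \<in> space ?P"
      then have "\<bar>h (\<omega> i)\<bar> \<le> 1" using bi i by auto
      then have "\<bar>h (\<omega> i)\<bar> * \<bar>h (\<omega> i)\<bar> \<le> 1" by (intro mult_le_one) auto
      then show "h (\<omega> i) * h (\<omega> i) \<le> 1" by (simp add: abs_mult[symmetric])
    qed (use i int2 in auto)
    also have "\<dots> = 1" by (simp add: P.prob_space)
    finally show "(\<Sum>k<n. \<integral>\<omega>. h (\<omega> i) * h (\<omega> k) \<partial>?P) \<le> 1" .
  qed
  finally show ?thesis by simp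
qed

lemma abs_le_c: fixes z c :: real assumes "0 < c" shows "\<bar>z\<bar> \<le> c + z^2 / c"
proof -
  have "c * \<bar>z\<bar> \<le> c^2 + z^2"
  proof (cases "\<bar>z\<bar> \<le> c")
    case True then have "c * \<bar>z\<bar> \<le> c * c" using assms by (intro mult_left_mono) auto
    moreover have "0 \<le> z * z" by simp
    ultimately show ?thesis unfolding power2_eq_square by linarith
  next
    case False then have "c * \<bar>z\<bar> \<le> \<bar>z\<bar> * \<bar>z\<bar>" by (intro mult_right_mono) auto
    moreover have "0 \<le> c * c" by simp
    ultimately show ?thesis unfolding power2_eq_square by linarith
  qed
  then show ?thesis using assms by (simp add: field_simps power2_eq_square)
qed

lemma abs_dev:
  fixes g :: "'a \<Rightarrow> real" and n :: nat and c :: real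
  assumes M: "prob_space M" and gm: "g \<in> borel_measurable M" and gb: "\<And>x. x \<in> space M \<Longrightarrow> 0 \<le> g x \<and> g x \<le> 1"
    and n: "0 < n" and c: "0 < c"
  shows "(\<integral>\<omega>. \<bar>(\<Sum>i<n. g (\<omega> i)) / n - (\<integral>x. g x \<partial>M)\<bar> \<partial>PiM {..<n} (\<lambda>_. M)) \<le> c + 1 / (n * c)"
proof -
  let ?P = "PiM {..<n} (\<lambda>_. M)"
  interpret P: prob_space ?P by (intro prob_space_PiM M)
  interpret M: prob_space M by (rule M)
  define p where "p = (\<integral>x. g x \<partial>M)"
  have gi: "integrable M g" using gb gm by (intro M.integrable_const_bound[where B=1]) auto
  have p01: "0 \<le> p \<and> p \<le> 1"
  proof
    show "0 \<le> p" unfolding p_def using gb by (intro integral_nonneg_AE) auto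
    have "p \<le> (\<integral>x. 1 \<partial>M)" unfolding p_def using gb gi by (intro integral_mono) auto
    then show "p \<le> 1" by (simp add: M.prob_space)
  qed
  define h where "h x = g x - p" for x
  have hm: "h \<in> borel_measurable M" unfolding h_def using gm by simp
  have hb: "\<bar>h x\<bar> \<le> 1" if "x \<in> space M" for x using gb[OF that] p01 unfolding h_def by auto
  have h0: "(\<integral>x. h x \<partial>M) = 0" unfolding h_def p_def using gi by (simp add: prob_space.prob_space[OF M] card_lessThan)
  have eq: "(\<Sum>i<n. g (\<omega> i)) / n - p = (\<Sum>i<n. h (\<omega> i)) / n" for \<omega>
    using n by (simp add: h_def sum_subtractf field_simps)
  have mi: "(\<lambda>\<omega>. h (\<omega> i)) \<in> borel_measurable ?P" if "i < n" for i
    using that by (intro measurable_compose[OF measurable_component_singleton[of i "{..<n}" "\<lambda>_. M"] hm]) auto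
  have ms: "(\<lambda>\<omega>. \<Sum>i<n. h (\<omega> i)) \<in> borel_measurable ?P" using mi by auto
  have bs: "\<bar>\<Sum>i<n. h (\<omega> i)\<bar> \<le> n" if "\<omega> \<in> space ?P" for \<omega>
  proof -
    have "\<bar>\<Sum>i<n. h (\<omega> i)\<bar> \<le> (\<Sum>i<n. \<bar>h (\<omega> i)\<bar>)" by (rule sum_abs)
    also have "\<dots> \<le> (\<Sum>i<n. 1)" using that hb by (intro sum_mono) (auto simp: space_PiM)
    finally show ?thesis by simp
  qed
  have i1: "integrable ?P (\<lambda>\<omega>. \<bar>(\<Sum>i<n. h (\<omega> i)) / n\<bar>)"
    using bs ms n by (intro P.integrable_const_bound[where B=1]) (auto intro!: AE_I2 simp: divide_le_eq_1)
  have i2: "integrable ?P (\<lambda>\<omega>. (\<Sum>i<n. h (\<omega> i))^2)"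
  proof (intro P.integrable_const_bound[where B="n^2"])
    show "AE x in ?P. norm ((\<Sum>i<n. h (x i))^2) \<le> n^2"
      using bs by (auto intro!: AE_I2 simp: abs_le_square_iff[symmetric] power_abs[symmetric] intro: power_mono)
  qed (use ms in auto)
  have "(\<integral>\<omega>. \<bar>(\<Sum>i<n. g (\<omega> i)) / n - p\<bar> \<partial>?P) = (\<integral>\<omega>. \<bar>(\<Sum>i<n. h (\<omega> i)) / n\<bar> \<partial>?P)"
    by (simp add: eq)
  also have "\<dots> \<le> (\<integral>\<omega>. c + (\<Sum>i<n. h (\<omega> i))^2 / (n^2 * c) \<partial>?P)"
  proof (rule integral_mono)
    show "integrable ?P (\<lambda>\<omega>. c + (\<Sum>i<n. h (\<omega> i))^2 / (n^2 * c))" using i2 by auto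
    fix \<omega>
    show "\<bar>(\<Sum>i<n. h (\<omega> i)) / n\<bar> \<le> c + (\<Sum>i<n. h (\<omega> i))^2 / (n^2 * c)"
      using abs_le_c[OF c, of "(\<Sum>i<n. h (\<omega> i)) / n"] by (simp add: power_divide)
  qed (rule i1)
  also have "\<dots> = c + (\<integral>\<omega>. (\<Sum>i<n. h (\<omega> i))^2 \<partial>?P) / (n^2 * c)"
    using i2 by (simp add: prob_space.prob_space[OF P.prob_space_axioms])
  also have "\<dots> \<le> c + n / (n^2 * c)"
    using second_moment[OF M hm hb h0, of n] c by (intro add_left_mono divide_right_mono) auto
  also have "n / (n^2 * c) = 1 / (n * c)" using n by (simp add: power2_eq_square)
  finally show ?thesis unfolding p_def .
qed



definition UU :: "real measure" where "UU = uniform_measure lborel {0..1}"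
definition Om :: "(nat \<Rightarrow> real) measure" where "Om = PiM UNIV (\<lambda>_. UU)"
definition FF :: "(nat \<Rightarrow> real) \<Rightarrow> (nat \<Rightarrow> real) \<Rightarrow> nat \<Rightarrow> bool" where
  "FF r \<omega> = (\<lambda>j. \<omega> 0 < 2 * r j \<and> \<omega> (Suc j) < 1/2)"
definition MM :: "(nat \<Rightarrow> real) \<Rightarrow> (nat \<Rightarrow> bool) measure" where
  "MM r = distr Om cube_space (FF r)"

lemma UU_prob: "prob_space UU"
  unfolding UU_def by (rule prob_space_uniform_measure) auto

lemma sets_UU[measurable_cong]: "sets UU = sets borel"
  unfolding UU_def by simp

lemma UU_lt: assumes "0 \<le> c" "c \<le> 1" shows "measure UU {..<c} = c"
proof -
  have "{0..1} \<inter> {..<c} = {0..<c}" using assms by auto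
  then show ?thesis unfolding UU_def using assms by (subst measure_uniform_measure) auto
qed

interpretation OmP: product_prob_space "\<lambda>_. UU" UNIV
  using UU_prob by (simp add: product_prob_space_def product_sigma_finite_def product_prob_space_axioms_def prob_space_imp_sigma_finite)

lemma Om_prob: "prob_space Om" unfolding Om_def by (rule OmP.prob_space_axioms)

lemma Om_collect:
  assumes "finite J" "\<And>i. i \<in> J \<Longrightarrow> X i \<in> sets borel"
  shows "measure Om {x\<in>space Om. \<forall>i\<in>J. x i \<in> X i} = (\<Prod>i\<in>J. measure UU (X i))"
proof -
  have "emeasure Om {x\<in>space Om. \<forall>i\<in>J. x i \<in> X i} = (\<Prod>i\<in>J. emeasure UU (X i))"
    unfolding Om_def using assms by (intro OmP.emeasure_PiM_Collect) auto
  also have "\<dots> = (\<Prod>i\<in>J. ennreal (measure UU (X i)))"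
    by (simp add: finite_measure.emeasure_eq_measure[OF prob_space.finite_measure[OF UU_prob]])
  also have "\<dots> = ennreal (\<Prod>i\<in>J. measure UU (X i))"
    by (simp add: prod_ennreal)
  finally show ?thesis unfolding measure_def by (simp add: prod_nonneg)
qed

lemma space_cube: "space cube_space = UNIV"
  unfolding cube_space_def by (auto simp: space_PiM)

lemma FF_meas: "FF r \<in> Om \<rightarrow>\<^sub>M cube_space"
  unfolding cube_space_def Om_def
proof (rule measurable_PiM_single')
  fix j :: nat
  show "(\<lambda>\<omega>. FF r \<omega> j) \<in> Pi\<^sub>M UNIV (\<lambda>_. UU) \<rightarrow>\<^sub>M count_space UNIV"
    unfolding FF_def pred_def[symmetric] by measurable
qed (auto simp: space_PiM)

lemma MM_prob: "prob_space (MM r)"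
  unfolding MM_def by (intro prob_space.prob_space_distr Om_prob FF_meas)

lemma sets_MM: "sets (MM r) = sets cube_space" unfolding MM_def by simp
lemma space_MM: "space (MM r) = UNIV" unfolding MM_def by (simp add: space_cube)

lemma meas_MM:
  assumes "A \<in> sets cube_space"
  shows "measure (MM r) A = measure Om {\<omega>\<in>space Om. FF r \<omega> \<in> A}"
proof -
  have "measure (MM r) A = measure Om (FF r -` A \<inter> space Om)"
    unfolding MM_def using assms by (intro measure_distr FF_meas)
  also have "FF r -` A \<inter> space Om = {\<omega>\<in>space Om. FF r \<omega> \<in> A}" by auto
  finally show ?thesis .
qed

lemma cube_coord: "{x. x j} \<in> sets cube_space"
proof -
  have "{x\<in>space cube_space. x j} \<in> sets cube_space"
    unfolding cube_space_def pred_def[symmetric] by measurable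
  then show ?thesis by (simp add: space_cube)
qed


lemma cube_neq: "{x. x i \<noteq> x j} \<in> sets cube_space"
proof -
  have "{x\<in>space cube_space. x i \<noteq> x j} \<in> sets cube_space"
    unfolding cube_space_def pred_def[symmetric] by measurable
  then show ?thesis by (simp add: space_cube)
qed

lemma cube_W: "{x. \<exists>j. r j \<le> \<delta> \<and> x j} \<in> sets cube_space"
proof -
  have "{x\<in>space cube_space. \<exists>j. r j \<le> \<delta> \<and> x j} \<in> sets cube_space"
    unfolding cube_space_def pred_def[symmetric] by measurable
  then show ?thesis by (simp add: space_cube)
qed

definition AA :: "(nat \<Rightarrow> real) \<Rightarrow> nat \<Rightarrow> (nat \<Rightarrow> real) set" where
  "AA r k = {\<omega>\<in>space Om. \<omega> 0 < 2 * r k \<and> \<omega> (Suc k) < 1/2}"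

lemma AA_sets: "AA r k \<in> sets Om"
  unfolding AA_def Om_def pred_def[symmetric] by measurable

lemma AA_meas:
  assumes r: "0 \<le> r k" "r k \<le> 1/2"
  shows "measure Om (AA r k) = r k"
proof -
  have "AA r k = {\<omega>\<in>space Om. \<forall>i\<in>{0, Suc k}. \<omega> i \<in> (if i = 0 then {..<2*r k} else {..<1/2})}"
    by (auto simp: AA_def)
  also have "measure Om \<dots> = (\<Prod>i\<in>{0,Suc k}. measure UU (if i = 0 then {..<2*r k} else {..<1/2}))"
    by (rule Om_collect) auto
  also have "\<dots> = 2 * r k * (1/2)" using r by (simp add: UU_lt)
  finally show ?thesis by simp
qed

lemma AA_Int_meas:
  assumes r: "\<And>k. 0 \<le> r k \<and> r k \<le> 1/2" and ij: "i \<noteq> j"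
  shows "measure Om (AA r i \<inter> AA r j) = min (r i) (r j) / 2"
proof -
  have "AA r i \<inter> AA r j = {\<omega>\<in>space Om. \<forall>l\<in>{0, Suc i, Suc j}. \<omega> l \<in> (if l = 0 then {..<2*min (r i) (r j)} else {..<1/2})}"
    by (auto simp: AA_def)
  also have "measure Om \<dots> = (\<Prod>l\<in>{0,Suc i, Suc j}. measure UU (if l = 0 then {..<2*min (r i) (r j)} else {..<1/2}))"
    by (rule Om_collect) auto
  also have "\<dots> = 2 * min (r i) (r j) * (1/2) * (1/2)"
  proof -
    have "measure UU {..<2 * min (r i) (r j)} = 2 * min (r i) (r j)"
      using r[of i] r[of j] by (intro UU_lt) auto
    then show ?thesis using r[of i] r[of j] ij by (simp add: UU_lt)
  qed
  finally show ?thesis by simp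
qed

lemma p_MM:
  assumes r: "0 \<le> r j" "r j \<le> 1/2"
  shows "measure (MM r) {x\<in>space (MM r). x j} = r j"
proof -
  have "measure (MM r) {x\<in>space (MM r). x j} = measure (MM r) {x. x j}" by (simp add: space_MM)
  also have "\<dots> = measure Om {\<omega>\<in>space Om. FF r \<omega> \<in> {x. x j}}" by (rule meas_MM[OF cube_coord])
  also have "{\<omega>\<in>space Om. FF r \<omega> \<in> {x. x j}} = AA r j" by (auto simp: AA_def FF_def)
  finally show ?thesis using AA_meas[where r=r and k=j, OF r] by simp
qed

lemma xi_MM:
  assumes r: "\<And>k. 0 \<le> r k \<and> r k \<le> 1/2"
  shows "xi (MM r) i j = (if i = j then 0 else max (r i) (r j))"
proof (cases "i = j")
  case True then show ?thesis by (simp add: xi_def)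
next
  case False
  interpret O: prob_space Om by (rule Om_prob)
  have "xi (MM r) i j = measure (MM r) {x. x i \<noteq> x j}" by (simp add: xi_def space_MM)
  also have "\<dots> = measure Om {\<omega>\<in>space Om. FF r \<omega> \<in> {x. x i \<noteq> x j}}" by (rule meas_MM[OF cube_neq])
  also have "{\<omega>\<in>space Om. FF r \<omega> \<in> {x. x i \<noteq> x j}} = (AA r i \<union> AA r j) - (AA r i \<inter> AA r j)"
    by (auto simp: AA_def FF_def)
  also have "measure Om \<dots> = measure Om (AA r i \<union> AA r j) - measure Om (AA r i \<inter> AA r j)"
    using AA_sets by (intro measure_Diff) (auto simp: O.fmeasurable_eq_sets)
  also have "measure Om (AA r i \<union> AA r j) = measure Om (AA r i) + measure Om (AA r j) - measure Om (AA r i \<inter> AA r j)"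
    using AA_sets by (intro measure_Un3) (auto simp: O.fmeasurable_eq_sets)
  finally show ?thesis using False AA_meas r[of i] r[of j] AA_Int_meas[OF r False] by (simp add: max_def min_def)
qed

lemma W_MM:
  assumes d: "0 \<le> \<delta>" "2 * \<delta> \<le> 1"
  shows "measure (MM r) {x. \<exists>j. r j \<le> \<delta> \<and> x j} \<le> 2 * \<delta>"
proof -
  interpret O: prob_space Om by (rule Om_prob)
  have "measure (MM r) {x. \<exists>j. r j \<le> \<delta> \<and> x j} = measure Om {\<omega>\<in>space Om. FF r \<omega> \<in> {x. \<exists>j. r j \<le> \<delta> \<and> x j}}"
    by (rule meas_MM[OF cube_W])
  also have "\<dots> \<le> measure Om {\<omega>\<in>space Om. \<forall>i\<in>{0}. \<omega> i \<in> {..<2*\<delta>}}"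
  proof (rule O.finite_measure_mono)
    show "{\<omega>\<in>space Om. \<forall>i\<in>{0}. \<omega> i \<in> {..<2*\<delta>}} \<in> sets Om"
      unfolding Om_def by measurable
  qed (auto simp: FF_def)
  also have "\<dots> = measure UU {..<2*\<delta>}" by (subst Om_collect) auto
  also have "\<dots> = 2 * \<delta>" using d by (simp add: UU_lt)
  finally show ?thesis .
qed



lemma MM_coord_meas: "(\<lambda>x. x j) \<in> MM r \<rightarrow>\<^sub>M count_space UNIV"
  by (simp add: measurable_cong_sets[OF sets_MM refl] cube_space_def)

lemma MM_W_meas: "(\<lambda>x. \<exists>j. r j \<le> \<delta> \<and> x j) \<in> MM r \<rightarrow>\<^sub>M count_space UNIV"
proof -
  have "{x\<in>space (MM r). \<exists>j. r j \<le> \<delta> \<and> x j} \<in> sets (MM r)"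
    using cube_W[of r \<delta>] by (simp add: space_MM sets_MM)
  then show ?thesis unfolding pred_def .
qed

lemma int_ofbool:
  assumes "prob_space M" "P \<in> M \<rightarrow>\<^sub>M count_space UNIV"
  shows "(\<integral>x. (of_bool (P x) :: real) \<partial>M) = measure M {x\<in>space M. P x}"
proof -
  have "(\<integral>x. (of_bool (P x) :: real) \<partial>M) = (\<integral>x. indicator {x. P x} x \<partial>M)"
    by (simp add: indicator_def)
  also have "\<dots> = measure M ({x. P x} \<inter> space M)" by simp
  also have "{x. P x} \<inter> space M = {x\<in>space M. P x}" by auto
  finally show ?thesis .
qed


lemma Delta_bound:
  fixes r :: "nat \<Rightarrow> real" and n :: nat and c \<delta> :: real
  assumes r: "\<And>k. 0 \<le> r k \<and> r k \<le> 1/2" and d: "0 < \<delta>" "2*\<delta> \<le> 1"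
    and fin: "finite {j. \<delta> < r j}" and n: "0 < n" and c: "0 < c"
  shows "0 \<le> Delta (MM r) n \<and> Delta (MM r) n \<le> card {j. \<delta> < r j} * (c + 1/(n*c)) + 3*\<delta>"
proof -
  let ?M = "MM r" let ?P = "PiM {..<n} (\<lambda>_. ?M)" let ?H = "{j. \<delta> < r j}"
  interpret M: prob_space ?M by (rule MM_prob)
  interpret P: prob_space ?P by (intro prob_space_PiM MM_prob)
  have p: "measure ?M {x\<in>space ?M. x j} = r j" for j using r[of j] by (intro p_MM) auto
  define S where "S j \<omega> = (\<Sum>i<n. of_bool (\<omega> i j) :: real)" for j :: nat and \<omega> :: "nat \<Rightarrow> nat \<Rightarrow> bool"
  define W where "W x = (\<exists>j. r j \<le> \<delta> \<and> x j)" for x :: "nat \<Rightarrow> bool"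
  define SW where "SW \<omega> = (\<Sum>i<n. of_bool (W (\<omega> i)) :: real)" for \<omega> :: "nat \<Rightarrow> nat \<Rightarrow> bool"
  define f where "f \<omega> = (SUP j. \<bar>S j \<omega> / n - r j\<bar>)" for \<omega>
  define g where "g \<omega> = (\<Sum>j\<in>?H. \<bar>S j \<omega> / n - r j\<bar>) + SW \<omega> / n + \<delta>" for \<omega>
  have Delta_eq: "Delta ?M n = integral\<^sup>L ?P f" unfolding Delta_def f_def S_def using p by simp
  have S01: "0 \<le> S j \<omega> \<and> S j \<omega> \<le> n" for j \<omega>
  proof -
    have "S j \<omega> \<le> (\<Sum>i<n. 1)" unfolding S_def by (intro sum_mono) auto
    moreover have "0 \<le> S j \<omega>" unfolding S_def by (intro sum_nonneg) auto
    ultimately show ?thesis by simp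
  qed
  have tb: "\<bar>S j \<omega> / n - r j\<bar> \<le> 1" for j \<omega>
  proof -
    have "S j \<omega> / n \<le> 1" using S01[of j \<omega>] n by (simp add: divide_le_eq_1)
    moreover have "0 \<le> S j \<omega> / n" using S01[of j \<omega>] by simp
    ultimately show ?thesis using r[of j] by auto
  qed
  have bdd: "bdd_above (range (\<lambda>j. \<bar>S j \<omega> / n - r j\<bar>))" for \<omega>
    using tb by (auto simp: bdd_above_def)
  have f0: "0 \<le> f \<omega>" for \<omega>
  proof -
    have "\<bar>S 0 \<omega> / n - r 0\<bar> \<le> f \<omega>" unfolding f_def by (rule cSUP_upper[OF UNIV_I bdd])
    then show ?thesis by (meson abs_ge_zero order_trans)
  qed
  have f1: "f \<omega> \<le> 1" for \<omega>
    unfolding f_def using tb by (intro cSUP_least) auto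
  have SW0: "0 \<le> SW \<omega>" for \<omega> unfolding SW_def by (intro sum_nonneg) auto
  have fg: "f \<omega> \<le> g \<omega>" for \<omega>
    unfolding f_def
  proof (rule cSUP_least)
    fix j
    show "\<bar>S j \<omega> / n - r j\<bar> \<le> g \<omega>"
    proof (cases "j \<in> ?H")
      case True
      have "\<bar>S j \<omega> / n - r j\<bar> \<le> (\<Sum>j\<in>?H. \<bar>S j \<omega> / n - r j\<bar>)"
        using True fin by (intro member_le_sum) auto
      moreover have "0 \<le> SW \<omega> / n" using SW0[of \<omega>] by simp
      ultimately show ?thesis unfolding g_def using d by linarith
    next
      case False
      then have rj: "r j \<le> \<delta>" by simp
      have "S j \<omega> \<le> SW \<omega>" unfolding S_def SW_def W_def using rj by (intro sum_mono) auto
      then have "S j \<omega> / n \<le> SW \<omega> / n" by (simp add: divide_right_mono)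
      moreover have "0 \<le> S j \<omega> / n" using S01[of j \<omega>] by simp
      moreover have "0 \<le> (\<Sum>j\<in>?H. \<bar>S j \<omega> / n - r j\<bar>)" by (intro sum_nonneg) auto
      moreover have "\<bar>S j \<omega> / n - r j\<bar> \<le> S j \<omega> / n + r j"
        using S01[of j \<omega>] r[of j] by (simp add: abs_le_iff)
      ultimately show ?thesis unfolding g_def using rj by linarith
    qed
  qed simp
  note mc[measurable] = MM_coord_meas[of _ r]
  note mW[measurable] = MM_W_meas[of r \<delta>]
  have mS[measurable]: "S j \<in> borel_measurable ?P" for j
    unfolding S_def by measurable
  have Wfun: "W = (\<lambda>x. \<exists>j. r j \<le> \<delta> \<and> x j)" unfolding W_def by (rule ext) simp
  have mSW[measurable]: "SW \<in> borel_measurable ?P"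
    unfolding SW_def Wfun by measurable
  have mf: "f \<in> borel_measurable ?P"
    unfolding f_def by (intro borel_measurable_cSUP) (auto simp: bdd)
  have intf: "integrable ?P f"
    using mf f0 f1 by (intro P.integrable_const_bound[where B=1]) auto
  have intS: "integrable ?P (\<lambda>\<omega>. \<bar>S j \<omega> / n - r j\<bar>)" for j
    using tb by (intro P.integrable_const_bound[where B=1]) auto
  have Wset: "{x\<in>space ?M. W x} \<in> sets ?M" using MM_W_meas[of r \<delta>] unfolding pred_def Wfun .
  have mWr: "(\<lambda>x. of_bool (W x) :: real) \<in> borel_measurable ?M"
  proof -
    have "(\<lambda>x. of_bool (W x) :: real) = indicator {x\<in>space ?M. W x}"
      by (rule ext) (simp add: space_MM indicator_def)
    then show ?thesis using Wset by simp
  qed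
  have intW1: "integrable ?P (\<lambda>\<omega>. of_bool (W (\<omega> i)) :: real)" if i: "i < n" for i
  proof (intro P.integrable_const_bound[where B=1])
    show "AE x in ?P. norm (of_bool (W (x i)) :: real) \<le> 1" by (intro AE_I2) (simp add: of_bool_def)
    show "(\<lambda>\<omega>. of_bool (W (\<omega> i)) :: real) \<in> borel_measurable ?P" using i by (intro measurable_compose[OF measurable_component_singleton[of i "{..<n}" "\<lambda>_. ?M"] mWr]) auto
  qed
  have intSW: "integrable ?P (\<lambda>\<omega>. SW \<omega> / n)"
    unfolding SW_def using intW1 by (intro integrable_divide Bochner_Integration.integrable_sum) auto
  have "Delta ?M n = integral\<^sup>L ?P f" by (rule Delta_eq)
  also have "\<dots> \<le> integral\<^sup>L ?P g"
    using intf intS intSW fg unfolding g_def by (intro integral_mono) auto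
  also have "integral\<^sup>L ?P g = (\<Sum>j\<in>?H. \<integral>\<omega>. \<bar>S j \<omega> / n - r j\<bar> \<partial>?P) + (\<integral>\<omega>. SW \<omega> / n \<partial>?P) + \<delta>"
    unfolding g_def using intS intSW by (simp add: P.prob_space)
  also have "(\<Sum>j\<in>?H. \<integral>\<omega>. \<bar>S j \<omega> / n - r j\<bar> \<partial>?P) \<le> (\<Sum>j\<in>?H. c + 1/(n*c))"
  proof (rule sum_mono)
    fix j
    have e: "(\<integral>x. (of_bool (x j) :: real) \<partial>?M) = r j"
      using int_ofbool[OF MM_prob mc[of j]] p[of j] by simp
    have "(\<integral>\<omega>. \<bar>(\<Sum>i<n. (of_bool (\<omega> i j) :: real)) / n - (\<integral>x. (of_bool (x j) :: real) \<partial>?M)\<bar> \<partial>?P) \<le> c + 1/(n*c)"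
      by (rule abs_dev[OF MM_prob _ _ n c]) auto
    then show "(\<integral>\<omega>. \<bar>S j \<omega> / n - r j\<bar> \<partial>?P) \<le> c + 1/(n*c)" unfolding S_def e .
  qed
  also have "(\<integral>\<omega>. SW \<omega> / n \<partial>?P) \<le> 2 * \<delta>"
  proof -
    have eW: "(\<integral>x. (of_bool (W x) :: real) \<partial>?M) = measure ?M {x. \<exists>j. r j \<le> \<delta> \<and> x j}"
      using int_ofbool[OF MM_prob mW] by (simp add: Wfun space_MM)
    have iW: "integrable ?M (\<lambda>x. of_bool (W x) :: real)"
      using mWr by (intro M.integrable_const_bound[where B=1]) (auto intro!: AE_I2 simp: of_bool_def)
    have s1: "(\<integral>\<omega>. SW \<omega> \<partial>?P) = (\<Sum>i<n. \<integral>\<omega>. (of_bool (W (\<omega> i)) :: real) \<partial>?P)"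
      unfolding SW_def by (rule Bochner_Integration.integral_sum[where I="{..<n}" and M="?P" and f="\<lambda>i \<omega>. of_bool (W (\<omega> i)) :: real"]) (use intW1 in auto)
    have s2: "(\<Sum>i<n. \<integral>\<omega>. (of_bool (W (\<omega> i)) :: real) \<partial>?P) = (\<Sum>i<n. \<integral>x. (of_bool (W x) :: real) \<partial>?M)"
      by (intro sum.cong refl PiM_integral_single[OF MM_prob iW]) auto
    have "(\<integral>\<omega>. SW \<omega> / n \<partial>?P) = (\<integral>\<omega>. SW \<omega> \<partial>?P) / n" by simp
    also have "\<dots> = (\<integral>x. (of_bool (W x) :: real) \<partial>?M)" unfolding s1 s2 using n by simp
    also have "\<dots> \<le> 2 * \<delta>" unfolding eW using d by (intro W_MM) auto
    finally show ?thesis .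
  qed
  finally have up: "Delta ?M n \<le> card ?H * (c + 1/(n*c)) + 3*\<delta>" by simp
  have "0 \<le> Delta ?M n" unfolding Delta_eq using f0 by (intro integral_nonneg_AE) auto
  with up show ?thesis by simp
qed



theorem proposition5:
  fixes N :: "real \<Rightarrow> nat"
  assumes mono: "\<And>a b. 0 < a \<Longrightarrow> a \<le> b \<Longrightarrow> b \<le> 1 \<Longrightarrow> N b \<le> N a"
    and pos: "\<And>\<epsilon>. 0 < \<epsilon> \<Longrightarrow> \<epsilon> \<le> 1 \<Longrightarrow> N \<epsilon> \<ge> 1"
  shows "\<exists>(M :: (nat \<Rightarrow> bool) measure) (E :: real set).
           prob_space M \<and> sets M = sets cube_space \<and>
           countable E \<and> E \<subseteq> {0<..1} \<and>
           (\<forall>\<epsilon> \<in> {0<..1/2} - E. covnum M \<epsilon> = enat (N \<epsilon>)) \<and>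
           (\<lambda>n. Delta M n) \<longlonglongrightarrow> 0"
proof -
  define r where "r = rr N"
  have rb: "\<And>k. 0 \<le> r k \<and> r k \<le> 1/2" unfolding r_def by (rule rr_bounds)
  have r0: "r 0 = 0" unfolding r_def by (simp add: rr_def)
  define E where "E = insert (1/2) (range r \<inter> {0<..1})"
  have cov: "covnum (MM r) \<epsilon> = enat (N \<epsilon>)" if e: "\<epsilon> \<in> {0<..1/2} - E" for \<epsilon>
  proof -
    have e1: "0 < \<epsilon>" "\<epsilon> < 1/2" "\<epsilon> \<notin> range (rr N)" using e by (auto simp: E_def r_def)
    have "covnum (MM r) \<epsilon> = enat (card {j. \<epsilon> < r j} + 1)"
      unfolding covnum_def
    proof (rule covnum_formula[where d="xi (MM r)" and r=r and \<epsilon>=\<epsilon>])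
      show "finite {j. \<epsilon> < r j}" unfolding r_def by (rule rr_finite[where N=N, OF mono e1(1)])
    qed (use rb e1 r0 xi_MM[OF rb] in auto)
    also have "card {j. \<epsilon> < r j} + 1 = N \<epsilon>"
      unfolding r_def by (rule rr_card[where N=N, OF mono pos e1]) (use e1 in auto)
    finally show ?thesis .
  qed
  have lim: "(\<lambda>n. Delta (MM r) n) \<longlonglongrightarrow> 0"
  proof (rule LIMSEQ_I)
    fix e :: real assume e: "0 < e"
    define \<delta> where "\<delta> = min (1/4) (e/8)"
    have d: "0 < \<delta>" "2 * \<delta> \<le> 1" "3 * \<delta> \<le> 3 * e / 8" using e by (auto simp: \<delta>_def)
    have fin: "finite {j. \<delta> < r j}" unfolding r_def using rr_finite[where N=N, OF mono d(1)] .
    define h where "h = card {j. \<delta> < r j}"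
    define c where "c = e / (4 * (h + 1))"
    have c: "0 < c" using e by (simp add: c_def)
    have hc: "h * c < e / 4" using e by (simp add: c_def field_simps)
    obtain m :: nat where m: "4 * h / (e * c) < m" using reals_Archimedean2 by blast
    show "\<exists>no. \<forall>n\<ge>no. norm (Delta (MM r) n - 0) < e"
    proof (intro exI[of _ "Suc m"] allI impI)
      fix n assume n: "Suc m \<le> n"
      then have n0: "0 < n" by simp
      have B: "0 \<le> Delta (MM r) n \<and> Delta (MM r) n \<le> h * (c + 1/(n*c)) + 3*\<delta>"
        unfolding h_def by (rule Delta_bound[OF rb d(1,2) fin n0 c])
      have "h / (n * c) < e / 4"
      proof -
        have "4 * h / (e * c) < n" using m n by linarith
        then have "4 * h < n * (e * c)" using e c by (simp add: field_simps)
        then show ?thesis using e c n0 by (simp add: field_simps)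
      qed
      moreover have "h * (c + 1/(n*c)) = h * c + h / (n*c)" by (simp add: distrib_left)
      ultimately have "h * (c + 1/(n*c)) < e / 2" using hc by linarith
      then show "norm (Delta (MM r) n - 0) < e" using B d(3) e by simp
    qed
  qed
  show ?thesis
    apply (rule exI[of _ "MM r"], rule exI[of _ E])
    using MM_prob sets_MM cov lim by (auto simp: E_def)
qed


end
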